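(* Let $\tilde\tau\in(0,1/2)$, $\epsilon,\epsilon'\in(0,1/2)$, and $\tau'=(\tau N-2)/(N-1)$. Let $\mathcal N_r$ be an arbitrary neighborhood of radius $r=2^{[1-H(\tau')]N/2-g(N)}$, with $g(N)=o(N)$. With probability at least $2^{-[1-H(\tau')](2\epsilon'+\epsilon'^2)N-o(N)}$, the initial configuration contains at least one $\epsilon'$-radical region inside $\mathcal N_r$.
   Context: Setting: $G_n$ is the $n\times n$ torus grid, $w$ is a positive integer, and $N=(2w+1)^2$. A neighborhood of radius $\rho$ is the set of vertices within $\ell_\infty$ distance $\rho$ of a center vertex. In the initial configuration, each vertex holds an agent of type $\pm1$, independently with probability $1/2$ each. The intolerance is $\tau=\lceil\tilde\tau N\rceil/N$, and $H$ is the binary entropy function. Let $\hat\tau=\tau\big(1-\frac{1}{\tau N^{1/2-\epsilon}}\big)$. An $\epsilon'$-radical region is a neighborhood of radius $(1+\epsilon')w$ containing fewer than $\hat\tau(1+\epsilon')^2N$ agents of type $-1$. A term $o(N)$ denotes some function $h(N)$ with $h(N)/N\to0$. *)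

theory Defs
  imports "HOL-Probability.Probability" "HOL-Library.Landau_Symbols"
begin

definition bin_entropy :: "real \<Rightarrow> real" where
  "bin_entropy x = - x * log 2 x - (1 - x) * log 2 (1 - x)"

definition torus_vertices :: "nat \<Rightarrow> (int \<times> int) set" where
  "torus_vertices n = {0..<int n} \<times> {0..<int n}"

definition cyc_dist :: "nat \<Rightarrow> int \<Rightarrow> int \<Rightarrow> int" where
  "cyc_dist n a b = min ((a - b) mod int n) ((b - a) mod int n)"

definition torus_dist :: "nat \<Rightarrow> int \<times> int \<Rightarrow> int \<times> int \<Rightarrow> int" where
  "torus_dist n u v = max (cyc_dist n (fst u) (fst v)) (cyc_dist n (snd u) (snd v))"

definition nbhd :: "nat \<Rightarrow> int \<times> int \<Rightarrow> real \<Rightarrow> (int \<times> int) set" where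
  "nbhd n c \<rho> = {v \<in> torus_vertices n. real_of_int (torus_dist n c v) \<le> \<rho>}"

text \<open>Configurations: each vertex carries type +1 or -1; uniform distribution
  = independent fair types.\<close>
definition configs :: "nat \<Rightarrow> ((int \<times> int) \<Rightarrow> int) set" where
  "configs n = PiE (torus_vertices n) (\<lambda>_. {-1, 1})"

definition config_prob :: "nat \<Rightarrow> (((int \<times> int) \<Rightarrow> int) \<Rightarrow> bool) \<Rightarrow> real" where
  "config_prob n P = measure_pmf.prob (pmf_of_set (configs n)) {\<sigma>. P \<sigma>}"

definition Nw :: "nat \<Rightarrow> nat" where "Nw w = (2 * w + 1)^2"

definition tau :: "real \<Rightarrow> nat \<Rightarrow> real" where
  "tau tt w = real_of_int \<lceil>tt * real (Nw w)\<rceil> / real (Nw w)"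

definition tau_hat :: "real \<Rightarrow> real \<Rightarrow> nat \<Rightarrow> real" where
  "tau_hat tt \<epsilon> w = tau tt w * (1 - 1 / (tau tt w * real (Nw w) powr (1/2 - \<epsilon>)))"

definition tau' :: "real \<Rightarrow> nat \<Rightarrow> real" where
  "tau' tt w = (tau tt w * real (Nw w) - 2) / (real (Nw w) - 1)"

definition minus_count :: "((int \<times> int) \<Rightarrow> int) \<Rightarrow> (int \<times> int) set \<Rightarrow> nat" where
  "minus_count \<sigma> S = card {v \<in> S. \<sigma> v = -1}"

definition radical_region ::
  "real \<Rightarrow> real \<Rightarrow> real \<Rightarrow> nat \<Rightarrow> nat \<Rightarrow> ((int \<times> int) \<Rightarrow> int) \<Rightarrow> int \<times> int \<Rightarrow> bool" where
  "radical_region tt \<epsilon> \<epsilon>' w n \<sigma> c \<longleftrightarrow> c \<in> torus_vertices n \<and>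
     real (minus_count \<sigma> (nbhd n c ((1 + \<epsilon>') * real w)))
       < tau_hat tt \<epsilon> w * (1 + \<epsilon>')^2 * real (Nw w)"

end

theory Submission
  imports Defs "HOL-Real_Asymp.Real_Asymp"
begin


lemma binom_step:
  fixes M j :: nat
  shows "(M choose (Suc j)) * (Suc j) = (M choose j) * (M - j)"
  using binomial_absorption[of j M] binomial_absorb_comp[of M j] by (simp add: mult.commute)

definition bt :: "nat \<Rightarrow> nat \<Rightarrow> nat \<Rightarrow> real" where
  "bt M k j = real (M choose j) * real k ^ j * real (M - k) ^ (M - j)"

lemma bt_rel:
  assumes "j < M"
  shows "bt M k (Suc j) * (Suc j) * (M - k) = bt M k j * (M - j) * k"
proof -
  have e: "real (M choose (Suc j)) * (Suc j) = real (M choose j) * (M - j)"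
    using binom_step[of M j] by (metis of_nat_mult)
  have "M - j = Suc (M - Suc j)" using assms by simp
  hence p: "real (M - k) ^ (M - j) = real (M - k) ^ (M - Suc j) * (M - k)" by simp
  have "bt M k (Suc j) * (Suc j) * (M - k) =
        (real (M choose (Suc j)) * (Suc j)) * real k ^ Suc j * real (M - k) ^ (M - Suc j) * (M - k)"
    unfolding bt_def by (simp add: algebra_simps)
  also have "\<dots> = real (M choose j) * (M - j) * real k ^ Suc j * real (M - k) ^ (M - Suc j) * (M - k)"
    using e by simp
  also have "\<dots> = bt M k j * (M - j) * k"
    unfolding bt_def using p assms by (simp add: algebra_simps of_nat_diff)
  finally show ?thesis .
qed

lemma bt_nonneg: "bt M k j \<ge> 0" unfolding bt_def by simp

lemma bt_dec:
  assumes "k \<le> j" "k < M"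
  shows "bt M k (Suc j) \<le> bt M k j"
proof (cases "j < M")
  case False
  hence "M choose Suc j = 0" by simp
  hence "bt M k (Suc j) = 0" unfolding bt_def by (simp del: binomial_eq_0_iff)
  then show ?thesis using bt_nonneg[of M k j] by simp
next
  case True
  have r: "bt M k (Suc j) * (real (Suc j) * real (M - k)) = bt M k j * (real (M - j) * real k)"
    using bt_rel[OF True, of k] by (simp add: algebra_simps)
  have le: "real (M - j) * real k \<le> real (Suc j) * real (M - k)"
  proof -
    have "real (M - j) \<le> real (M - k)" using assms by simp
    moreover have "real k \<le> real (Suc j)" using assms by simp
    ultimately show ?thesis by (simp add: mult_mono mult.commute)
  qed
  have pos: "real (Suc j) * real (M - k) > 0" using assms by simp
  have "bt M k (Suc j) * (real (Suc j) * real (M - k)) \<le> bt M k j * (real (Suc j) * real (M - k))"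
    using r le bt_nonneg[of M k j] by (metis mult_left_mono)
  thus ?thesis using pos by (meson mult_le_cancel_right_pos)
qed

lemma bt_inc:
  assumes "j < k" "k \<le> M"
  shows "bt M k j \<le> bt M k (Suc j)"
proof -
  have jM: "j < M" using assms by simp
  have r: "bt M k j * (real (M - j) * real k) = bt M k (Suc j) * (real (Suc j) * real (M - k))"
    using bt_rel[OF jM, of k] by (simp add: algebra_simps)
  have le: "real (Suc j) * real (M - k) \<le> real (M - j) * real k"
  proof -
    have "real (M - k) \<le> real (M - j)" using assms by simp
    moreover have "real (Suc j) \<le> real k" using assms by simp
    ultimately show ?thesis by (simp add: mult_mono mult.commute)
  qed
  have pos: "real (M - j) * real k > 0" using assms by simp
  have "bt M k j * (real (M - j) * real k) \<le> bt M k (Suc j) * (real (M - j) * real k)"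
    using r le bt_nonneg[of M k "Suc j"] by (metis mult_left_mono)
  thus ?thesis using pos by (meson mult_le_cancel_right_pos)
qed

lemma bt_max:
  assumes "k < M"
  shows "bt M k j \<le> bt M k k"
proof (cases "k \<le> j")
  case True
  then show ?thesis
  proof (induction j rule: dec_induct)
    case base then show ?case by simp
  next
    case (step i) then show ?case using bt_dec[of k i M] assms by simp
  qed
next
  case False
  hence "j \<le> k" by simp
  then show ?thesis
  proof (induction j rule: inc_induct)
    case base then show ?case by simp
  next
    case (step i) then show ?case using bt_inc[of i k M] assms by simp
  qed
qed

lemma binom_lower:
  assumes "k < M"
  shows "real M ^ M \<le> real (M + 1) * bt M k k"
proof -
  have "real M ^ M = (real k + real (M - k)) ^ M" using assms by (simp add: of_nat_diff)
  also have "\<dots> = (\<Sum>j\<le>M. bt M k j)"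
    unfolding binomial_ring bt_def by simp
  also have "\<dots> \<le> (\<Sum>j\<le>M. bt M k k)"
    by (rule sum_mono) (use bt_max[OF assms] in auto)
  also have "\<dots> = real (M + 1) * bt M k k" by simp
  finally show ?thesis .
qed

lemma entropy_binom:
  assumes "0 < k" "k < M"
  shows "2 powr (real M * bin_entropy (real k / real M)) \<le> real (M + 1) * real (M choose k)"
proof -
  define q where "q = real k / real M"
  have Mpos: "real M > 0" using assms by simp
  have q0: "0 < q" "q < 1" using assms unfolding q_def by (auto simp: field_simps)
  have 1: "1 - q = real (M - k) / real M" unfolding q_def using assms Mpos by (simp add: field_simps of_nat_diff)
  have e: "real M * bin_entropy q = real k * log 2 (1/q) + real (M - k) * log 2 (1/(1-q))"
  proof -
    have "real M * q = real k" unfolding q_def using Mpos by simp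
    moreover have "real M * (1 - q) = real (M - k)" using 1 Mpos by simp
    moreover have "log 2 (1/q) = - log 2 q" "log 2 (1/(1-q)) = - log 2 (1-q)"
      using q0 by (simp_all add: log_divide)
    moreover have "real M * bin_entropy q = -(real M * q) * log 2 q - (real M * (1-q)) * log 2 (1-q)"
      by (simp add: bin_entropy_def algebra_simps)
    ultimately show ?thesis by simp
  qed
  have a: "2 powr (real k * log 2 (1/q)) = (real M / real k) ^ k"
  proof -
    have "2 powr (real k * log 2 (1/q)) = (2 powr (log 2 (1/q))) powr real k"
      by (simp add: powr_powr mult.commute)
    also have "\<dots> = (1/q) powr real k" using q0 by simp
    also have "\<dots> = (1/q) ^ k" using q0 by (simp add: powr_realpow)
    finally show ?thesis unfolding q_def by simp
  qed
  have b: "2 powr (real (M - k) * log 2 (1/(1-q))) = (real M / real (M - k)) ^ (M - k)"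
  proof -
    have "2 powr (real (M-k) * log 2 (1/(1-q))) = (2 powr (log 2 (1/(1-q)))) powr real (M-k)"
      by (simp add: powr_powr mult.commute)
    also have "\<dots> = (1/(1-q)) powr real (M-k)" using q0 by simp
    also have "\<dots> = (1/(1-q)) ^ (M-k)" using q0 by (simp add: powr_realpow)
    finally show ?thesis unfolding 1 by simp
  qed
  have "2 powr (real M * bin_entropy q) = (real M / real k) ^ k * (real M / real (M - k)) ^ (M - k)"
    unfolding e powr_add a b by simp
  also have "\<dots> = real M ^ M / (real k ^ k * real (M - k) ^ (M - k))"
  proof -
    have "real M ^ M = real M ^ k * real M ^ (M - k)" using assms
      by (metis le_add_diff_inverse less_imp_le power_add)
    thus ?thesis by (simp add: power_divide)
  qed
  also have "\<dots> \<le> real (M + 1) * bt M k k / (real k ^ k * real (M - k) ^ (M - k))"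
    using binom_lower[OF assms(2)] assms by (intro divide_right_mono) auto
  also have "\<dots> = real (M + 1) * real (M choose k)"
    unfolding bt_def using assms by simp
  finally show ?thesis unfolding q_def .
qed


lemma ent_aux:
  fixes x :: real assumes "0 < x"
  shows "- x * ln 2 - x * ln x \<le> 1/2 - x"
    and "x \<noteq> 1/2 \<Longrightarrow> - x * ln 2 - x * ln x < 1/2 - x"
proof -
  have p: "0 < 1/(2*x)" using assms by simp
  have l: "ln (1/(2*x)) = - ln 2 - ln x" using assms by (simp add: ln_div ln_mult)
  have "ln (1/(2*x)) \<le> 1/(2*x) - 1" using ln_le_minus_one[OF p] .
  hence "x * ln (1/(2*x)) \<le> x * (1/(2*x) - 1)" using assms by (simp add: mult_left_mono)
  thus "- x * ln 2 - x * ln x \<le> 1/2 - x" using assms unfolding l by (simp add: algebra_simps)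
  assume ne: "x \<noteq> 1/2"
  have "1/(2*x) \<noteq> 1" using ne assms by (auto simp: field_simps)
  hence "ln (1/(2*x)) \<noteq> 1/(2*x) - 1" using ln_eq_minus_one[OF p] by auto
  hence "ln (1/(2*x)) < 1/(2*x) - 1" using ln_le_minus_one[OF p] by simp
  hence "x * ln (1/(2*x)) < x * (1/(2*x) - 1)" using assms by (simp add: mult_strict_left_mono)
  thus "- x * ln 2 - x * ln x < 1/2 - x" using assms unfolding l by (simp add: algebra_simps)
qed

lemma ent_ln: "bin_entropy x = (- x * ln x - (1 - x) * ln (1 - x)) / ln 2"
  unfolding bin_entropy_def log_def by (simp add: field_simps)

lemma ent_le1:
  assumes "0 < x" "x < 1" shows "bin_entropy x \<le> 1"
proof -
  have "- x * ln x - (1 - x) * ln (1 - x) \<le> ln 2"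
    using ent_aux(1)[of x] ent_aux(1)[of "1-x"] assms by (simp add: algebra_simps)
  thus ?thesis unfolding ent_ln by simp
qed

lemma ent_less1:
  assumes "0 < x" "x < 1" "x \<noteq> 1/2" shows "bin_entropy x < 1"
proof -
  have "- x * ln x - (1 - x) * ln (1 - x) < ln 2"
    using ent_aux(2)[of x] ent_aux(1)[of "1-x"] assms by (simp add: algebra_simps)
  thus ?thesis unfolding ent_ln by simp
qed

lemma ent_cont:
  assumes "0 < x" "x < 1" shows "isCont bin_entropy x"
proof -
  have "isCont (\<lambda>x. - x * log 2 x - (1 - x) * log 2 (1 - x)) x"
    using assms by (intro continuous_intros) auto
  thus ?thesis unfolding bin_entropy_def[abs_def] .
qed


definition S1 :: "nat \<Rightarrow> int \<Rightarrow> int \<Rightarrow> int set" where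
  "S1 n c m = (\<lambda>d. (c + d) mod int n) ` {-m..m}"

lemma cyc_ball:
  assumes "2*m+1 \<le> int n" "0 \<le> m" "0 \<le> c" "c < int n"
  shows "{b \<in> {0..<int n}. cyc_dist n c b \<le> m} = S1 n c m"
proof (intro equalityI subsetI)
  have npos: "int n > 0" using assms by simp
  fix b assume "b \<in> {b \<in> {0..<int n}. cyc_dist n c b \<le> m}"
  hence b: "0 \<le> b" "b < int n" "cyc_dist n c b \<le> m" by auto
  have bm: "b mod int n = b" using b by simp
  show "b \<in> S1 n c m"
  proof (cases "(c - b) mod int n \<le> m")
    case True
    have "(c + - ((c - b) mod int n)) mod int n = (c - (c - b)) mod int n"
      by (simp add: mod_diff_right_eq)
    also have "\<dots> = b" using bm by simp
    finally have "b = (c + - ((c - b) mod int n)) mod int n" by simp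
    moreover have "- ((c - b) mod int n) \<in> {-m..m}" 
    proof -
      have "0 \<le> (c-b) mod int n" using npos by simp
      hence "- m \<le> - ((c - b) mod int n)" "- ((c - b) mod int n) \<le> m" using True assms by linarith+
      thus ?thesis by simp
    qed
    ultimately show ?thesis unfolding S1_def by blast
  next
    case False
    hence F: "(b - c) mod int n \<le> m" using b(3) unfolding cyc_dist_def by linarith
    have "(c + ((b - c) mod int n)) mod int n = (c + (b - c)) mod int n"
      by (simp add: mod_add_right_eq)
    also have "\<dots> = b" using bm by simp
    finally have "b = (c + ((b - c) mod int n)) mod int n" by simp
    moreover have "((b - c) mod int n) \<in> {-m..m}" 
    proof -
      have "0 \<le> (b-c) mod int n" using npos by simp
      hence "- m \<le> ((b - c) mod int n)" "((b - c) mod int n) \<le> m" using F assms by linarith+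
      thus ?thesis by simp
    qed
    ultimately show ?thesis unfolding S1_def by blast
  qed
next
  have npos: "int n > 0" using assms by simp
  fix b assume "b \<in> S1 n c m"
  then obtain d where d: "d \<in> {-m..m}" "b = (c + d) mod int n" unfolding S1_def by auto
  have b: "0 \<le> b" "b < int n" using d npos by auto
  have "cyc_dist n c b \<le> m"
  proof (cases "0 \<le> d")
    case True
    have "(b - c) mod int n = (c + d - c) mod int n" using d by (simp add: mod_diff_left_eq)
    also have "\<dots> = d" using True d assms by simp
    finally show ?thesis unfolding cyc_dist_def using d by (simp add: min_le_iff_disj)
  next
    case False
    have "(c - b) mod int n = (c - (c + d)) mod int n" using d by (simp add: mod_diff_right_eq)
    also have "\<dots> = - d" using False d assms by simp
    finally show ?thesis unfolding cyc_dist_def using d by (simp add: min_le_iff_disj)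
  qed
  thus "b \<in> {b \<in> {0..<int n}. cyc_dist n c b \<le> m}" using b by simp
qed

lemma inj_mod:
  assumes "\<And>d d'. d \<in> S \<Longrightarrow> d' \<in> S \<Longrightarrow> \<bar>d - d'\<bar> < int n"
  shows "inj_on (\<lambda>d. (c + d) mod int n) S"
proof (rule inj_onI)
  fix d d' assume h: "d \<in> S" "d' \<in> S" "(c + d) mod int n = (c + d') mod int n"
  hence "int n dvd (c + d) - (c + d')" by (simp add: mod_eq_dvd_iff)
  hence "int n dvd d - d'" by simp
  moreover have "\<bar>d - d'\<bar> < int n" using assms h by simp
  ultimately have "\<bar>d - d'\<bar> < int n" "int n dvd d - d'" by auto
  then obtain k where k: "d - d' = int n * k" by (auto simp: dvd_def)
  show "d = d'"
  proof (rule ccontr)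
    assume "d \<noteq> d'"
    hence "k \<noteq> 0" using k by auto
    hence "\<bar>k\<bar> \<ge> 1" by simp
    hence "int n * \<bar>k\<bar> \<ge> int n" by (simp add: mult_le_cancel_left1)
    thus False using k \<open>\<bar>d - d'\<bar> < int n\<close> by (simp add: abs_mult)
  qed
qed

lemma card_S1:
  assumes "2*m+1 \<le> int n" "0 \<le> m"
  shows "card (S1 n c m) = nat (2*m+1)"
proof -
  have "inj_on (\<lambda>d. (c + d) mod int n) {-m..m}"
    by (rule inj_mod) (use assms in auto)
  hence "card (S1 n c m) = card {-m..m}" unfolding S1_def by (rule card_image)
  thus ?thesis using assms by simp
qed

lemma nbhd_eq:
  assumes "2 * \<lfloor>\<rho>\<rfloor> + 1 \<le> int n" "0 \<le> \<rho>" "c \<in> torus_vertices n"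
  shows "nbhd n c \<rho> = S1 n (fst c) \<lfloor>\<rho>\<rfloor> \<times> S1 n (snd c) \<lfloor>\<rho>\<rfloor>"
proof -
  have c: "0 \<le> fst c" "fst c < int n" "0 \<le> snd c" "snd c < int n"
    using assms(3) unfolding torus_vertices_def by auto
  have f: "0 \<le> \<lfloor>\<rho>\<rfloor>" using assms by simp
  have "nbhd n c \<rho> = {v \<in> torus_vertices n. cyc_dist n (fst c) (fst v) \<le> \<lfloor>\<rho>\<rfloor> \<and> cyc_dist n (snd c) (snd v) \<le> \<lfloor>\<rho>\<rfloor>}"
    unfolding nbhd_def torus_dist_def by (auto simp: le_floor_iff)
  also have "\<dots> = {b \<in> {0..<int n}. cyc_dist n (fst c) b \<le> \<lfloor>\<rho>\<rfloor>} \<times> {b \<in> {0..<int n}. cyc_dist n (snd c) b \<le> \<lfloor>\<rho>\<rfloor>}"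
    unfolding torus_vertices_def by auto
  also have "\<dots> = S1 n (fst c) \<lfloor>\<rho>\<rfloor> \<times> S1 n (snd c) \<lfloor>\<rho>\<rfloor>"
    using cyc_ball[OF assms(1) f c(1,2)] cyc_ball[OF assms(1) f c(3,4)] by simp
  finally show ?thesis .
qed


lemma S1_shift: "S1 n ((x0 + t) mod int n) m = (\<lambda>d. (x0 + d) mod int n) ` {t-m..t+m}"
proof -
  have "S1 n ((x0 + t) mod int n) m = (\<lambda>d. (x0 + (t + d)) mod int n) ` {-m..m}"
    unfolding S1_def by (intro image_cong refl) (simp add: mod_add_left_eq add.assoc)
  also have "\<dots> = (\<lambda>d. (x0 + d) mod int n) ` ((\<lambda>d. t + d) ` {-m..m})"
    by (simp only: image_image)
  also have "(\<lambda>d. t + d) ` {-m..m} = {t-m..t+m}"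
  proof (intro equalityI subsetI)
    fix x assume "x \<in> {t-m..t+m}"
    hence "x - t \<in> {-m..m}" "x = t + (x - t)" by auto
    thus "x \<in> (\<lambda>d. t + d) ` {-m..m}" by blast
  qed auto
  finally show ?thesis .
qed

definition offs :: "int \<Rightarrow> int \<Rightarrow> int \<Rightarrow> int" where
  "offs R m a = -R + m + a * (2*m+1)"

definition Bx :: "nat \<Rightarrow> int \<Rightarrow> int \<Rightarrow> int \<Rightarrow> int \<Rightarrow> int set" where
  "Bx n x0 R m a = S1 n ((x0 + offs R m a) mod int n) m"

lemma Bx_img: "Bx n x0 R m a = (\<lambda>d. (x0 + d) mod int n) ` {-R + a*(2*m+1) .. -R + a*(2*m+1) + 2*m}"
  unfolding Bx_def S1_shift offs_def by (simp add: algebra_simps)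

lemma interval_sub:
  fixes R m a :: int
  assumes "0 \<le> m" "0 \<le> a" "a < (2*R+1) div (2*m+1)"
  shows "{-R + a*(2*m+1) .. -R + a*(2*m+1) + 2*m} \<subseteq> {-R..R}"
proof -
  have "a + 1 \<le> (2*R+1) div (2*m+1)" using assms by simp
  hence "(a+1)*(2*m+1) \<le> (2*R+1) div (2*m+1) * (2*m+1)" using assms by (intro mult_right_mono) auto
  also have "\<dots> \<le> 2*R+1"
  proof -
    have "(2*R+1) div (2*m+1) * (2*m+1) = (2*R+1) - (2*R+1) mod (2*m+1)"
      by (simp add: minus_mod_eq_div_mult)
    moreover have "0 \<le> (2*R+1) mod (2*m+1)" using assms by simp
    ultimately show ?thesis by linarith
  qed
  finally have "a*(2*m+1) + 2*m \<le> 2*R" by (simp add: algebra_simps)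
  moreover have "0 \<le> a*(2*m+1)" using assms by simp
  ultimately show ?thesis by auto
qed

lemma Bx_sub:
  fixes R m a :: int
  assumes "0 \<le> m" "0 \<le> a" "a < (2*R+1) div (2*m+1)" "0 \<le> R"
  shows "Bx n x0 R m a \<subseteq> S1 n x0 R"
  unfolding Bx_img S1_def using interval_sub[OF assms(1-3)] by (intro image_mono) auto

lemma Bx_disj:
  fixes R m a a' :: int
  assumes "0 \<le> m" "0 \<le> a" "a < (2*R+1) div (2*m+1)" "0 \<le> a'" "a' < (2*R+1) div (2*m+1)"
    "a \<noteq> a'" "2*R+1 \<le> int n"
  shows "Bx n x0 R m a \<inter> Bx n x0 R m a' = {}"
proof -
  let ?f = "\<lambda>d. (x0 + d) mod int n"
  let ?A = "{-R + a*(2*m+1) .. -R + a*(2*m+1) + 2*m}"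
  let ?A' = "{-R + a'*(2*m+1) .. -R + a'*(2*m+1) + 2*m}"
  have inj: "inj_on ?f {-R..R}" by (rule inj_mod) (use assms in auto)
  have d: "?A \<inter> ?A' = {}"
  proof (rule ccontr)
    assume "?A \<inter> ?A' \<noteq> {}"
    then obtain x where x: "x \<in> ?A" "x \<in> ?A'" by blast
    show False
    proof (cases "a < a'")
      case True
      hence "a + 1 \<le> a'" by simp
      hence "(a+1)*(2*m+1) \<le> a'*(2*m+1)" using assms by (intro mult_right_mono) auto
      thus False using x by (auto simp: algebra_simps)
    next
      case False
      hence "a' + 1 \<le> a" using assms by simp
      hence "(a'+1)*(2*m+1) \<le> a*(2*m+1)" using assms by (intro mult_right_mono) auto
      thus False using x by (auto simp: algebra_simps)
    qed
  qed
  have "?f ` ?A \<inter> ?f ` ?A' = ?f ` (?A \<inter> ?A')"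
    using inj_on_image_Int[OF inj interval_sub[OF assms(1-3)] interval_sub[OF assms(1,4,5)]] by simp
  thus ?thesis unfolding Bx_img using d by simp
qed

lemma card_Bx:
  assumes "0 \<le> m" "2*m+1 \<le> int n"
  shows "card (Bx n x0 R m a) = nat (2*m+1)"
  unfolding Bx_def using card_S1 assms by simp

lemma Bx_center:
  assumes "0 < n" shows "(x0 + offs R m a) mod int n \<in> {0..<int n}"
  using assms by simp


definition Pp :: "'a set \<Rightarrow> ('a \<Rightarrow> int) pmf" where
  "Pp S = Pi_pmf S undefined (\<lambda>_. pmf_of_set {-1, 1::int})"

lemma PiE_dflt_undef: "PiE_dflt A undefined B = PiE A B"
proof (intro equalityI subsetI)
  fix f assume "f \<in> PiE_dflt A undefined B"
  hence "\<forall>x. (x \<in> A \<longrightarrow> f x \<in> B x) \<and> (x \<notin> A \<longrightarrow> f x = undefined)" unfolding PiE_dflt_def by simp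
  thus "f \<in> PiE A B" unfolding PiE_iff extensional_def by simp
next
  fix f assume "f \<in> PiE A B"
  hence "(\<forall>x\<in>A. f x \<in> B x)" "\<forall>x. x \<notin> A \<longrightarrow> f x = undefined" unfolding PiE_iff extensional_def by auto
  thus "f \<in> PiE_dflt A undefined B" unfolding PiE_dflt_def by simp
qed

lemma Pp_eq: "finite S \<Longrightarrow> Pp S = pmf_of_set (PiE S (\<lambda>_. {-1, 1::int}))"
  unfolding Pp_def by (subst Pi_pmf_of_set) (auto simp: PiE_dflt_undef)

lemma configs_Pp: "pmf_of_set (configs n) = Pp (torus_vertices n)"
  unfolding configs_def by (rule Pp_eq[symmetric]) (simp add: torus_vertices_def)

lemma prob_pair_countable:
  "measure (pair_pmf M N) (X \<times> Y) = measure M X * measure N Y"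
proof -
  have "measure (pair_pmf M N) (X \<times> Y) = measure (pair_pmf M N) ((X \<times> Y) \<inter> set_pmf (pair_pmf M N))"
    by (rule measure_Int_set_pmf[symmetric])
  also have "(X \<times> Y) \<inter> set_pmf (pair_pmf M N) = (X \<inter> set_pmf M) \<times> (Y \<inter> set_pmf N)" by auto
  also have "measure (pair_pmf M N) \<dots> = measure M (X \<inter> set_pmf M) * measure N (Y \<inter> set_pmf N)"
    by (rule measure_pmf_prob_product) (auto intro: countable_subset)
  also have "\<dots> = measure M X * measure N Y" by (simp add: measure_Int_set_pmf)
  finally show ?thesis .
qed

lemma indep2:
  assumes "finite A" "finite B" "A \<inter> B = {}"
  shows "measure (Pp (A \<union> B)) {f. P (restrict f A) \<and> Q (restrict f B)} =
         measure (Pp A) {f. P (restrict f A)} * measure (Pp B) {g. Q (restrict g B)}"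
proof -
  let ?h = "\<lambda>(f,g) x. if x \<in> A then f x else (g x :: int)"
  have "Pp (A \<union> B) = map_pmf ?h (pair_pmf (Pp A) (Pp B))"
    unfolding Pp_def by (rule Pi_pmf_union[OF assms])
  hence "measure (Pp (A \<union> B)) {f. P (restrict f A) \<and> Q (restrict f B)} =
     measure (pair_pmf (Pp A) (Pp B)) (?h -` {f. P (restrict f A) \<and> Q (restrict f B)})"
    by simp
  also have "?h -` {f. P (restrict f A) \<and> Q (restrict f B)} = {f. P (restrict f A)} \<times> {g. Q (restrict g B)}"
  proof -
    have "\<And>f g. restrict (?h (f,g)) A = restrict f A" by (auto simp: restrict_def)
    moreover have "\<And>f g. restrict (?h (f,g)) B = restrict g B" using assms(3) by (auto simp: restrict_def fun_eq_iff)
    ultimately show ?thesis by auto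
  qed
  also have "measure (pair_pmf (Pp A) (Pp B)) \<dots> = measure (Pp A) {f. P (restrict f A)} * measure (Pp B) {g. Q (restrict g B)}"
    by (rule prob_pair_countable)
  finally show ?thesis .
qed

lemma restrict_sub_event: "W \<subseteq> V \<Longrightarrow> finite V \<Longrightarrow>
  measure (Pp V) {f. P (restrict f W)} = measure (Pp W) {f. P (restrict f W)}"
proof -
  assume a: "W \<subseteq> V" "finite V"
  have "V = W \<union> (V - W)" using a by auto
  hence "measure (Pp V) {f. P (restrict f W)} = measure (Pp (W \<union> (V - W))) {f. P (restrict f W) \<and> (\<lambda>_. True) (restrict f (V - W))}"
    by simp
  also have "\<dots> = measure (Pp W) {f. P (restrict f W)} * measure (Pp (V - W)) {g. True}"
    using a by (intro indep2) (auto intro: finite_subset)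
  also have "\<dots> = measure (Pp W) {f. P (restrict f W)}" by simp
  finally show ?thesis .
qed

lemma indep_family:
  assumes "finite I" "\<And>i. i \<in> I \<Longrightarrow> finite (B i)" "disjoint_family_on B I"
  shows "measure (Pp (\<Union>i\<in>I. B i)) {f. \<forall>i\<in>I. P i (restrict f (B i))} =
         (\<Prod>i\<in>I. measure (Pp (B i)) {f. P i (restrict f (B i))})"
  using assms
proof (induction I rule: finite_induct)
  case empty
  then show ?case by simp
next
  case (insert a I)
  let ?U = "\<Union>i\<in>I. B i"
  have fa: "finite (B a)" using insert by simp
  have fU: "finite ?U" using insert by simp
  have "\<forall>i\<in>I. B a \<inter> B i = {}"
  proof
    fix i assume i: "i \<in> I"
    hence "a \<noteq> i" using insert(2) by blast
    thus "B a \<inter> B i = {}" using disjoint_family_onD[OF insert(5)] i by simp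
  qed
  hence dj: "B a \<inter> ?U = {}" by blast
  have r: "restrict (restrict f ?U) (B i) = restrict f (B i)" if i: "i \<in> I" for f i
  proof
    fix x
    show "restrict (restrict f ?U) (B i) x = restrict f (B i) x"
    proof (cases "x \<in> B i")
      case True
      hence "x \<in> ?U" using i by blast
      thus ?thesis using True by simp
    qed simp
  qed
  have r2: "?U \<inter> B i = B i" if "i \<in> I" for i using that by blast
  have e1: "{f. \<forall>i\<in>insert a I. P i (restrict f (B i))} =
        {f. P a (restrict f (B a)) \<and> (\<lambda>g. \<forall>i\<in>I. P i (restrict g (B i))) (restrict f ?U)}"
    using r2 by simp
  have e2: "(\<Union>i\<in>insert a I. B i) = B a \<union> ?U" by simp
  have "measure (Pp (\<Union>i\<in>insert a I. B i)) {f. \<forall>i\<in>insert a I. P i (restrict f (B i))} =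
     measure (Pp (B a)) {f. P a (restrict f (B a))} * measure (Pp ?U) {g. (\<lambda>g. \<forall>i\<in>I. P i (restrict g (B i))) (restrict g ?U)}"
    unfolding e1 e2 by (rule indep2[OF fa fU dj])
  also have "{g. (\<lambda>g. \<forall>i\<in>I. P i (restrict g (B i))) (restrict g ?U)} = {g. \<forall>i\<in>I. P i (restrict g (B i))}"
    using r2 by simp
  also have "measure (Pp ?U) \<dots> = (\<Prod>i\<in>I. measure (Pp (B i)) {f. P i (restrict f (B i))})"
    using insert by (intro insert.IH) (auto simp: disjoint_family_on_def)
  finally show ?case unfolding prod.insert[OF insert(1,2)] .
qed

lemma good_prob:
  assumes "finite B" "card B = M"
  shows "measure (Pp B) {f. card {v \<in> B. f v = -1} \<le> k} \<ge> real (M choose k) / 2 ^ M"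
proof -
  let ?S = "PiE B (\<lambda>_. {-1, 1::int})"
  have fS: "finite ?S" using assms by (simp add: finite_PiE)
  have nS: "?S \<noteq> {}" by (simp add: PiE_eq_empty_iff)
  have cS: "card ?S = 2 ^ M" using assms by (simp add: card_PiE numeral_2_eq_2)
  let ?E = "{f \<in> ?S. card {v \<in> B. f v = -1} = k}"
  have bij: "bij_betw (\<lambda>f. {v \<in> B. f v = -1}) ?E {T. T \<subseteq> B \<and> card T = k}"
  proof (rule bij_betwI[where g = "\<lambda>T v. if v \<in> B then (if v \<in> T then -1 else 1) else undefined"])
    show "(\<lambda>f. {v \<in> B. f v = -1}) \<in> ?E \<rightarrow> {T. T \<subseteq> B \<and> card T = k}" by auto
    show "(\<lambda>T v. if v \<in> B then (if v \<in> T then -1 else 1) else undefined) \<in> {T. T \<subseteq> B \<and> card T = k} \<rightarrow> ?E"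
    proof
      fix T assume T: "T \<in> {T. T \<subseteq> B \<and> card T = k}"
      have "{v \<in> B. (if v \<in> B then (if v \<in> T then -1 else 1) else undefined) = (-1::int)} = T"
        using T by auto
      thus "(\<lambda>v. if v \<in> B then (if v \<in> T then -1 else 1) else undefined) \<in> ?E" using T by auto
    qed
    show "\<And>f. f \<in> ?E \<Longrightarrow> (\<lambda>v. if v \<in> B then (if v \<in> {v \<in> B. f v = -1} then -1 else 1) else undefined) = f"
      by (auto simp: fun_eq_iff PiE_def extensional_def)
    show "\<And>T. T \<in> {T. T \<subseteq> B \<and> card T = k} \<Longrightarrow> {v \<in> B. (if v \<in> B then (if v \<in> T then -1 else 1) else undefined) = (-1::int)} = T"
      by auto
  qed
  have cE: "card ?E = M choose k"
    using bij_betw_same_card[OF bij] n_subsets[OF assms(1), of k] assms(2) by simp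
  have "measure (Pp B) {f. card {v \<in> B. f v = -1} \<le> k} = real (card (?S \<inter> {f. card {v \<in> B. f v = -1} \<le> k})) / real (card ?S)"
    unfolding Pp_eq[OF assms(1)] using fS nS by (simp add: measure_pmf_of_set)
  also have "\<dots> \<ge> real (card ?E) / real (card ?S)"
    using fS by (intro divide_right_mono of_nat_mono card_mono) auto
  finally show ?thesis using cE cS by simp
qed


lemma pmf_compl: "measure (measure_pmf p) (UNIV - A) = 1 - measure (measure_pmf p) A"
  using measure_pmf.prob_compl[of A p] by simp

lemma ball_card_cong:
  assumes "\<And>p. p \<in> I \<Longrightarrow> {v \<in> B p. f p v = (-1::int)} = {v \<in> B p. g p v = -1}"
  shows "(\<forall>p\<in>I. k < card {v \<in> B p. f p v = -1}) = (\<forall>p\<in>I. k < card {v \<in> B p. g p v = -1})"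
proof (rule ball_cong[OF refl])
  fix p assume "p \<in> I"
  from assms[OF this] show "(k < card {v \<in> B p. f p v = -1}) = (k < card {v \<in> B p. g p v = -1})" by (rule arg_cong)
qed

lemma core:
  fixes n :: nat and c0 :: "int \<times> int" and \<rho> r :: real and k :: nat
  defines "m \<equiv> \<lfloor>\<rho>\<rfloor>" and "R \<equiv> \<lfloor>r\<rfloor>"
  defines "L \<equiv> nat ((2*R+1) div (2*m+1))" and "M \<equiv> nat (2*m+1) ^ 2"
  assumes c0: "c0 \<in> torus_vertices n" and rho: "0 \<le> \<rho>" and r: "0 \<le> r" "2 * r + 1 \<le> real n"
    and mn: "2*m+1 \<le> int n"
  shows "config_prob n (\<lambda>\<sigma>. \<exists>c. c \<in> torus_vertices n \<and> minus_count \<sigma> (nbhd n c \<rho>) \<le> k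
            \<and> nbhd n c \<rho> \<subseteq> nbhd n c0 r)
         \<ge> 1 - (1 - real (M choose k) / 2 ^ M) ^ (L^2)"
proof -
  define x0 where "x0 = fst c0"
  define y0 where "y0 = snd c0"
  define L' where "L' = (2*R+1) div (2*m+1)"
  define I where "I = {0..<L'} \<times> {0..<L'}"
  define B where "B p = Bx n x0 R m (fst p) \<times> Bx n y0 R m (snd p)" for p
  define cen where "cen p = ((x0 + offs R m (fst p)) mod int n, (y0 + offs R m (snd p)) mod int n)" for p
  define V where "V = torus_vertices n"
  have m0: "0 \<le> m" unfolding m_def using rho by simp
  have R0: "0 \<le> R" unfolding R_def using r by simp
  have Rn: "2*R+1 \<le> int n"
  proof -
    have "real_of_int (2*R+1) \<le> 2*r+1" unfolding R_def by simp
    also have "\<dots> \<le> real n" using r by simp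
    finally show ?thesis by linarith
  qed
  have npos: "0 < n" using Rn R0 by simp
  have fV: "finite V" unfolding V_def torus_vertices_def by simp
  have c0': "0 \<le> x0" "x0 < int n" "0 \<le> y0" "y0 < int n" using c0 unfolding x0_def y0_def torus_vertices_def by auto
  have cenV: "cen p \<in> V" for p unfolding cen_def V_def torus_vertices_def using npos by simp
  have nb: "nbhd n (cen p) \<rho> = B p" for p
  proof -
    have "nbhd n (cen p) \<rho> = S1 n (fst (cen p)) \<lfloor>\<rho>\<rfloor> \<times> S1 n (snd (cen p)) \<lfloor>\<rho>\<rfloor>"
      by (rule nbhd_eq[OF mn[unfolded m_def] rho cenV[unfolded V_def]])
    thus ?thesis unfolding B_def Bx_def cen_def m_def by simp
  qed
  have nb0: "nbhd n c0 r = S1 n x0 R \<times> S1 n y0 R"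
    using nbhd_eq[OF Rn[unfolded R_def] r(1) c0] unfolding x0_def y0_def R_def by simp
  have Bsub: "B p \<subseteq> nbhd n c0 r" if "p \<in> I" for p
    unfolding nb0 B_def using that Bx_sub[OF m0 _ _ R0, of "fst p" n x0] Bx_sub[OF m0 _ _ R0, of "snd p" n y0]
    unfolding I_def L'_def by auto
  have BV: "B p \<subseteq> V" if "p \<in> I" for p
    using Bsub[OF that] unfolding nbhd_def V_def by auto
  have fB: "finite (B p)" if "p \<in> I" for p using BV[OF that] fV finite_subset by blast
  have cB: "card (B p) = M" for p
    unfolding B_def M_def card_cartesian_product card_Bx[OF m0 mn] by (simp add: power2_eq_square)
  have disj: "disjoint_family_on B I"
  unfolding disjoint_family_on_def proof (intro ballI impI)
    fix p q assume pq: "p \<in> I" "q \<in> I" "p \<noteq> q"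
    show "B p \<inter> B q = {}"
    proof (cases "fst p = fst q")
      case True
      hence "snd p \<noteq> snd q" using pq(3) by (simp add: prod_eq_iff)
      hence "Bx n y0 R m (snd p) \<inter> Bx n y0 R m (snd q) = {}"
        using pq Bx_disj[OF m0, of "snd p" R "snd q" n y0] Rn unfolding I_def L'_def by auto
      thus ?thesis unfolding B_def by auto
    next
      case False
      hence "Bx n x0 R m (fst p) \<inter> Bx n x0 R m (fst q) = {}"
        using pq Bx_disj[OF m0, of "fst p" R "fst q" n x0] Rn unfolding I_def L'_def by auto
      thus ?thesis unfolding B_def by auto
    qed
  qed
  define W where "W = (\<Union>p\<in>I. B p)"
  have WV: "W \<subseteq> V" unfolding W_def using BV by auto
  define q where "q = real (M choose k) / 2 ^ M"
  have fI: "finite I" unfolding I_def by simp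
  have cI: "card I = L^2" unfolding I_def L_def L'_def by (simp add: power2_eq_square)
  have allbad: "measure (Pp V) {\<sigma>. \<forall>p\<in>I. k < card {v \<in> B p. \<sigma> v = -1}} \<le> (1 - q) ^ (L^2)"
  proof -
    have e1: "{\<sigma>::int\<times>int\<Rightarrow>int. \<forall>p\<in>I. k < card {v \<in> B p. \<sigma> v = -1}} =
              {\<sigma>. (\<lambda>g. \<forall>p\<in>I. k < card {v \<in> B p. g v = -1}) (restrict \<sigma> W)}"
    proof -
      have "{v \<in> B p. \<sigma> v = -1} = {v \<in> B p. restrict \<sigma> W v = -1}" if "p \<in> I" for p and \<sigma> :: "int \<times> int \<Rightarrow> int"
        using that unfolding W_def by auto
      hence "(\<forall>p\<in>I. k < card {v \<in> B p. \<sigma> v = -1}) = (\<forall>p\<in>I. k < card {v \<in> B p. restrict \<sigma> W v = -1})" for \<sigma> :: "int \<times> int \<Rightarrow> int"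
        by (rule ball_card_cong[where f="\<lambda>_. \<sigma>" and g="\<lambda>_. restrict \<sigma> W"])
      thus ?thesis by (rule Collect_cong)
    qed
    have "measure (Pp V) {\<sigma>. \<forall>p\<in>I. k < card {v \<in> B p. \<sigma> v = -1}} =
          measure (Pp W) {\<sigma>. (\<lambda>g. \<forall>p\<in>I. k < card {v \<in> B p. g v = -1}) (restrict \<sigma> W)}"
      unfolding e1 by (rule restrict_sub_event[OF WV fV])
    also have "{\<sigma>::int\<times>int\<Rightarrow>int. (\<lambda>g. \<forall>p\<in>I. k < card {v \<in> B p. g v = -1}) (restrict \<sigma> W)} =
               {\<sigma>. \<forall>p\<in>I. (\<lambda>p g. k < card {v \<in> B p. g v = -1}) p (restrict \<sigma> (B p))}"
    proof -
      have "{v \<in> B p. restrict \<sigma> W v = -1} = {v \<in> B p. restrict \<sigma> (B p) v = -1}" if "p \<in> I" for p and \<sigma> :: "int \<times> int \<Rightarrow> int"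
        using that unfolding W_def by auto
      hence "(\<forall>p\<in>I. k < card {v \<in> B p. restrict \<sigma> W v = -1}) = (\<forall>p\<in>I. k < card {v \<in> B p. restrict \<sigma> (B p) v = -1})" for \<sigma> :: "int \<times> int \<Rightarrow> int"
        by (rule ball_card_cong[where f="\<lambda>_. restrict \<sigma> W" and g="\<lambda>p. restrict \<sigma> (B p)"])
      thus ?thesis by (rule Collect_cong)
    qed
    also have "measure (Pp W) \<dots> = (\<Prod>p\<in>I. measure (Pp (B p)) {f. (\<lambda>p g. k < card {v \<in> B p. g v = -1}) p (restrict f (B p))})"
      unfolding W_def by (rule indep_family[OF fI fB disj])
    also have "\<dots> \<le> (\<Prod>p\<in>I. (1 - q))"
    proof (rule prod_mono)
      fix p assume p: "p \<in> I"
      have rr: "{v \<in> B p. restrict f (B p) v = -1} = {v \<in> B p. f v = -1}" for f :: "int\<times>int\<Rightarrow>int"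
        by auto
      have "{f. k < card {v \<in> B p. restrict f (B p) v = -1}} = UNIV - {f::int\<times>int\<Rightarrow>int. card {v \<in> B p. f v = -1} \<le> k}"
        unfolding rr by auto
      hence "measure (Pp (B p)) {f. (\<lambda>p g. k < card {v \<in> B p. g v = -1}) p (restrict f (B p))} =
             1 - measure (Pp (B p)) {f. card {v \<in> B p. f v = -1} \<le> k}"
        by (simp add: pmf_compl)
      moreover have "measure (Pp (B p)) {f. card {v \<in> B p. f v = -1} \<le> k} \<ge> q"
        unfolding q_def by (rule good_prob[OF fB[OF p] cB])
      ultimately show "0 \<le> measure (Pp (B p)) {f. (\<lambda>p g. k < card {v \<in> B p. g v = -1}) p (restrict f (B p))} \<and>
             measure (Pp (B p)) {f. (\<lambda>p g. k < card {v \<in> B p. g v = -1}) p (restrict f (B p))} \<le> 1 - q"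
        by simp
    qed
    also have "\<dots> = (1 - q) ^ (L^2)" using cI by simp
    finally show ?thesis .
  qed
  have sub: "UNIV - {\<sigma>::int\<times>int\<Rightarrow>int. \<forall>p\<in>I. k < card {v \<in> B p. \<sigma> v = -1}} \<subseteq>
     {\<sigma>. \<exists>c. c \<in> torus_vertices n \<and> minus_count \<sigma> (nbhd n c \<rho>) \<le> k \<and> nbhd n c \<rho> \<subseteq> nbhd n c0 r}"
  proof
    fix \<sigma> :: "int\<times>int\<Rightarrow>int" assume "\<sigma> \<in> UNIV - {\<sigma>. \<forall>p\<in>I. k < card {v \<in> B p. \<sigma> v = -1}}"
    then obtain p where p: "p \<in> I" "card {v \<in> B p. \<sigma> v = -1} \<le> k" by auto
    have "cen p \<in> torus_vertices n" using cenV unfolding V_def by simp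
    moreover have "minus_count \<sigma> (nbhd n (cen p) \<rho>) \<le> k" unfolding minus_count_def nb using p by simp
    moreover have "nbhd n (cen p) \<rho> \<subseteq> nbhd n c0 r" unfolding nb using Bsub[OF p(1)] .
    ultimately show "\<sigma> \<in> {\<sigma>. \<exists>c. c \<in> torus_vertices n \<and> minus_count \<sigma> (nbhd n c \<rho>) \<le> k \<and> nbhd n c \<rho> \<subseteq> nbhd n c0 r}"
      by blast
  qed
  have "1 - (1 - q) ^ (L^2) \<le> 1 - measure (Pp V) {\<sigma>. \<forall>p\<in>I. k < card {v \<in> B p. \<sigma> v = -1}}"
    using allbad by simp
  also have "\<dots> = measure (Pp V) (UNIV - {\<sigma>. \<forall>p\<in>I. k < card {v \<in> B p. \<sigma> v = -1}})"
    by (simp add: pmf_compl)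
  also have "\<dots> \<le> measure (Pp V) {\<sigma>. \<exists>c. c \<in> torus_vertices n \<and> minus_count \<sigma> (nbhd n c \<rho>) \<le> k \<and> nbhd n c \<rho> \<subseteq> nbhd n c0 r}"
    by (rule measure_pmf.finite_measure_mono[OF sub]) simp
  also have "\<dots> = config_prob n (\<lambda>\<sigma>. \<exists>c. c \<in> torus_vertices n \<and> minus_count \<sigma> (nbhd n c \<rho>) \<le> k
            \<and> nbhd n c \<rho> \<subseteq> nbhd n c0 r)"
    unfolding config_prob_def configs_Pp V_def ..
  finally show ?thesis unfolding q_def .
qed


lemma Nw_real: "real (Nw w) = (2 * real w + 1)^2"
  unfolding Nw_def by simp

lemma Nw_at_top: "filterlim (\<lambda>w. real (Nw w)) at_top sequentially"
  unfolding Nw_real by real_asymp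

lemma Nw_ge1: "real (Nw w) \<ge> 1"
  unfolding Nw_real by simp

lemma Nw_nat_at_top: "filterlim Nw at_top sequentially"
proof -
  have "Nw w \<ge> w" for w unfolding Nw_def by (simp add: power2_eq_square)
  thus ?thesis by (intro filterlim_at_top_mono[OF filterlim_ident]) auto
qed

lemma inv_Nw: "((\<lambda>w. 1 / real (Nw w)) \<longlongrightarrow> 0) sequentially"
  unfolding Nw_real by real_asymp

locale A5 =
  fixes tt \<epsilon> \<epsilon>' :: real and g :: "nat \<Rightarrow> real"
  assumes tt: "0 < tt" "tt < 1/2" and eps: "0 < \<epsilon>" "\<epsilon> < 1/2"
    and eps': "0 < \<epsilon>'" "\<epsilon>' < 1/2" and g: "g \<in> o(\<lambda>N. real N)"
begin

definition "NN w = real (Nw w)"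
definition "mm w = \<lfloor>(1+\<epsilon>') * real w\<rfloor>"
definition "MM w = nat (2 * mm w + 1) ^ 2"
definition "TT w = tau_hat tt \<epsilon> w * (1+\<epsilon>')^2 * NN w"
definition "kk w = nat (\<lceil>TT w\<rceil> - 1)"
definition "Ht w = bin_entropy (tau' tt w)"
definition "DD w = 1 + log 2 (real (MM w) * (real (MM w) + 1))
   + (1+\<epsilon>')^2 * NN w * \<bar>Ht w - bin_entropy (real (kk w) / real (MM w))\<bar>"

lemma NN_pos: "NN w \<ge> 1" unfolding NN_def by (rule Nw_ge1)

lemma tau_bounds: "tt \<le> tau tt w" "tau tt w \<le> tt + 1 / NN w"
proof -
  have N: "NN w \<ge> 1" by (rule NN_pos)
  have "tt * NN w \<le> real_of_int \<lceil>tt * NN w\<rceil>" by simp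
  thus "tt \<le> tau tt w" unfolding tau_def NN_def[symmetric] using N by (simp add: field_simps)
  have "real_of_int \<lceil>tt * NN w\<rceil> \<le> tt * NN w + 1" by linarith
  thus "tau tt w \<le> tt + 1 / NN w" unfolding tau_def NN_def[symmetric] using N by (simp add: field_simps)
qed

lemma lim_tau: "((\<lambda>w. tau tt w) \<longlongrightarrow> tt) sequentially"
proof (rule tendsto_sandwich[of "\<lambda>_. tt" _ _ "\<lambda>w. tt + 1 / NN w"])
  show "((\<lambda>w. tt + 1 / NN w) \<longlongrightarrow> tt) sequentially"
    using tendsto_add[OF tendsto_const inv_Nw] unfolding NN_def by simp
qed (use tau_bounds in auto)

lemma tau_pos: "tau tt w > 0" using tau_bounds(1)[of w] tt by simp

lemma lim_tau_hat: "((\<lambda>w. tau_hat tt \<epsilon> w) \<longlongrightarrow> tt) sequentially"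
proof -
  have e: "tau_hat tt \<epsilon> w = tau tt w - NN w powr (\<epsilon> - 1/2)" for w
  proof -
    have "NN w powr (\<epsilon> - 1/2) = 1 / NN w powr (1/2 - \<epsilon>)"
      using NN_pos[of w] by (simp add: powr_minus_divide[symmetric])
    thus ?thesis unfolding tau_hat_def NN_def[symmetric] using tau_pos[of w] NN_pos[of w]
      by (simp add: field_simps)
  qed
  have "((\<lambda>w. NN w powr (\<epsilon> - 1/2)) \<longlongrightarrow> 0) sequentially"
    using eps unfolding NN_def by (intro tendsto_neg_powr Nw_at_top) auto
  from tendsto_diff[OF lim_tau this] show ?thesis unfolding e by simp
qed

lemma lim_tau': "((\<lambda>w. tau' tt w) \<longlongrightarrow> tt) sequentially"
proof -
  have e: "eventually (\<lambda>w. (tau tt w - 2 / NN w) / (1 - 1 / NN w) = tau' tt w) sequentially"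
  proof (rule eventually_sequentiallyI[of 1])
    fix w :: nat assume "1 \<le> w"
    hence "2 * real w + 1 \<ge> 3" by simp
    hence "(2 * real w + 1) * (2 * real w + 1) \<ge> 3 * 3" by (intro mult_mono) auto
    hence "NN w > 1" unfolding NN_def Nw_real by (simp add: power2_eq_square)
    thus "(tau tt w - 2 / NN w) / (1 - 1 / NN w) = tau' tt w"
      unfolding tau'_def NN_def[symmetric] by (simp add: field_simps)
  qed
  have "((\<lambda>w. (tau tt w - 2 / NN w) / (1 - 1 / NN w)) \<longlongrightarrow> (tt - 0) / (1 - 0)) sequentially"
  proof -
    have i: "((\<lambda>w. 1 / NN w) \<longlongrightarrow> 0) sequentially" using inv_Nw unfolding NN_def .
    have "((\<lambda>w. 2 * (1 / NN w)) \<longlongrightarrow> 2 * 0) sequentially" by (rule tendsto_mult[OF tendsto_const i])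
    hence i2: "((\<lambda>w. 2 / NN w) \<longlongrightarrow> 0) sequentially" by (simp only: times_divide_eq_right mult_1_right mult_zero_right)
    show ?thesis by (rule tendsto_divide[OF tendsto_diff[OF lim_tau i2] tendsto_diff[OF tendsto_const i]]) simp
  qed
  thus ?thesis using e by (simp add: tendsto_cong)
qed

lemma mm_bounds: "(1+\<epsilon>') * real w - 1 < real_of_int (mm w)" "real_of_int (mm w) \<le> (1+\<epsilon>') * real w"
  unfolding mm_def by linarith+

lemma mm_nonneg: "0 \<le> mm w" unfolding mm_def using eps' by simp

lemma MM_real: "real (MM w) = (2 * real_of_int (mm w) + 1)^2"
  unfolding MM_def using mm_nonneg[of w] by simp

lemma MM_pos: "real (MM w) \<ge> 1"
  unfolding MM_real using mm_nonneg[of w] by simp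

lemma MM_le: "real (MM w) \<le> (1+\<epsilon>')^2 * NN w"
proof -
  have "2 * real_of_int (mm w) + 1 \<le> (1+\<epsilon>') * (2 * real w + 1)"
    using mm_bounds(2)[of w] eps' by (simp add: algebra_simps)
  moreover have "0 \<le> 2 * real_of_int (mm w) + 1" using mm_nonneg[of w] by simp
  ultimately have "(2 * real_of_int (mm w) + 1)^2 \<le> ((1+\<epsilon>') * (2 * real w + 1))^2"
    by (rule power_mono)
  thus ?thesis unfolding MM_real NN_def Nw_real by (simp add: power_mult_distrib)
qed

lemma lim_MM: "((\<lambda>w. real (MM w) / NN w) \<longlongrightarrow> (1+\<epsilon>')^2) sequentially"
proof -
  have r: "((\<lambda>w. (2 * real_of_int (mm w) + 1) / (2 * real w + 1)) \<longlongrightarrow> 1+\<epsilon>') sequentially"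
  proof (rule tendsto_sandwich[of "\<lambda>w. (2*(1+\<epsilon>')*real w - 1) / (2 * real w + 1)" _ _
        "\<lambda>w. (2*(1+\<epsilon>')*real w + 1) / (2 * real w + 1)"])
    show "\<forall>\<^sub>F w in sequentially. (2*(1+\<epsilon>')*real w - 1) / (2 * real w + 1) \<le> (2 * real_of_int (mm w) + 1) / (2 * real w + 1)"
    proof (intro always_eventually allI divide_right_mono)
      fix w show "2*(1+\<epsilon>')*real w - 1 \<le> 2 * real_of_int (mm w) + 1" using mm_bounds(1)[of w] by linarith
    qed simp
    show "\<forall>\<^sub>F w in sequentially. (2 * real_of_int (mm w) + 1) / (2 * real w + 1) \<le> (2*(1+\<epsilon>')*real w + 1) / (2 * real w + 1)"
    proof (intro always_eventually allI divide_right_mono)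
      fix w show "2 * real_of_int (mm w) + 1 \<le> 2*(1+\<epsilon>')*real w + 1" using mm_bounds(2)[of w] by linarith
    qed simp
    show "((\<lambda>w. (2*(1+\<epsilon>')*real w - 1) / (2 * real w + 1)) \<longlongrightarrow> 1+\<epsilon>') sequentially"
      using eps' by real_asymp
    show "((\<lambda>w. (2*(1+\<epsilon>')*real w + 1) / (2 * real w + 1)) \<longlongrightarrow> 1+\<epsilon>') sequentially"
      using eps' by real_asymp
  qed
  have "real (MM w) / NN w = ((2 * real_of_int (mm w) + 1) / (2 * real w + 1))^2" for w
    unfolding MM_real NN_def Nw_real by (simp add: power_divide)
  thus ?thesis using tendsto_power[OF r, of 2] by simp
qed

lemma lim_TT: "((\<lambda>w. TT w / NN w) \<longlongrightarrow> tt * (1+\<epsilon>')^2) sequentially"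
proof -
  have "TT w / NN w = tau_hat tt \<epsilon> w * (1+\<epsilon>')^2" for w
    unfolding TT_def using NN_pos[of w] by simp
  thus ?thesis using tendsto_mult[OF lim_tau_hat tendsto_const[of "(1+\<epsilon>')^2"]] by simp
qed

lemma inv_NN: "((\<lambda>w. 1 / NN w) \<longlongrightarrow> 0) sequentially" using inv_Nw unfolding NN_def .

lemma NN_at_top: "filterlim NN at_top sequentially" using Nw_at_top unfolding NN_def[abs_def] .

lemma ev_TT: "eventually (\<lambda>w. TT w > 1) sequentially"
proof -
  have p: "tt * (1+\<epsilon>')^2 / 2 > 0" using tt eps' by simp
  have "eventually (\<lambda>w. TT w / NN w > tt * (1+\<epsilon>')^2 / 2) sequentially"
    using lim_TT p by (intro order_tendstoD) auto
  moreover have "eventually (\<lambda>w. NN w > 2 / (tt * (1+\<epsilon>')^2)) sequentially"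
    using NN_at_top by (simp add: filterlim_at_top_dense)
  ultimately show ?thesis
  proof eventually_elim
    case (elim w)
    have N: "NN w > 0" using NN_pos[of w] by simp
    from elim(1) have a: "TT w > tt * (1+\<epsilon>')^2 / 2 * NN w" using N by (simp add: field_simps)
    have b: "tt * (1+\<epsilon>')^2 / 2 * NN w > tt * (1+\<epsilon>')^2 / 2 * (2 / (tt * (1+\<epsilon>')^2))"
      using elim(2) p by (intro mult_strict_left_mono) auto
    have c: "tt * (1+\<epsilon>')^2 / 2 * (2 / (tt * (1+\<epsilon>')^2)) = 1" using tt eps' by (simp add: field_simps)
    show ?case using a b c by linarith
  qed
qed

lemma kk_bounds: "TT w > 0 \<Longrightarrow> TT w - 1 \<le> real (kk w) \<and> real (kk w) < TT w"
proof -
  assume T: "TT w > 0"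
  have c: "TT w \<le> real_of_int \<lceil>TT w\<rceil>" "real_of_int \<lceil>TT w\<rceil> < TT w + 1" by linarith+
  hence "\<lceil>TT w\<rceil> \<ge> 1" using T by linarith
  hence "real (kk w) = real_of_int \<lceil>TT w\<rceil> - 1" unfolding kk_def by simp
  thus ?thesis using c by linarith
qed

lemma lim_kk: "((\<lambda>w. real (kk w) / NN w) \<longlongrightarrow> tt * (1+\<epsilon>')^2) sequentially"
proof (rule tendsto_sandwich[of "\<lambda>w. TT w / NN w - 1 / NN w" _ _ "\<lambda>w. TT w / NN w"])
  show "\<forall>\<^sub>F w in sequentially. TT w / NN w - 1 / NN w \<le> real (kk w) / NN w"
    using ev_TT
  proof eventually_elim
    case (elim w) thus ?case using kk_bounds[of w] NN_pos[of w] by (simp add: diff_divide_distrib[symmetric] divide_right_mono)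
  qed
  show "\<forall>\<^sub>F w in sequentially. real (kk w) / NN w \<le> TT w / NN w"
    using ev_TT
  proof eventually_elim
    case (elim w) thus ?case using kk_bounds[of w] NN_pos[of w] by (simp add: divide_right_mono)
  qed
  show "((\<lambda>w. TT w / NN w - 1 / NN w) \<longlongrightarrow> tt * (1+\<epsilon>')^2) sequentially"
    using tendsto_diff[OF lim_TT inv_NN] by simp
qed (rule lim_TT)

lemma lim_kM: "((\<lambda>w. real (kk w) / real (MM w)) \<longlongrightarrow> tt) sequentially"
proof -
  have "real (kk w) / real (MM w) = (real (kk w) / NN w) / (real (MM w) / NN w)" for w
    using NN_pos[of w] by simp
  moreover have "((\<lambda>w. (real (kk w) / NN w) / (real (MM w) / NN w)) \<longlongrightarrow> tt * (1+\<epsilon>')^2 / (1+\<epsilon>')^2) sequentially"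
    using eps' by (intro tendsto_divide lim_kk lim_MM) auto
  moreover have "tt * (1+\<epsilon>')^2 / (1+\<epsilon>')^2 = tt" using eps' by simp
  ultimately show ?thesis by (simp only:)
qed

lemma lim_HkM: "((\<lambda>w. bin_entropy (real (kk w) / real (MM w))) \<longlongrightarrow> bin_entropy tt) sequentially"
  using tt by (intro isCont_tendsto_compose[OF ent_cont lim_kM]) auto

lemma lim_Ht: "((\<lambda>w. Ht w) \<longlongrightarrow> bin_entropy tt) sequentially"
  unfolding Ht_def using tt by (intro isCont_tendsto_compose[OF ent_cont lim_tau']) auto

lemma lim_g: "((\<lambda>w. g (Nw w) / NN w) \<longlongrightarrow> 0) sequentially"
proof -
  have "((\<lambda>N. g N / real N) \<longlongrightarrow> 0) sequentially" using smalloD_tendsto[OF g] .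
  from filterlim_compose[OF this Nw_nat_at_top] show ?thesis unfolding NN_def by simp
qed

lemma lim_logM: "((\<lambda>w. log 2 (real (MM w) * (real (MM w) + 1)) / NN w) \<longlongrightarrow> 0) sequentially"
proof (rule tendsto_sandwich[of "\<lambda>_. 0" _ _ "\<lambda>w. log 2 (12 * NN w ^ 2) / NN w"])
  have M3: "real (MM w) \<le> 3 * NN w" for w
  proof -
    have "1+\<epsilon>' \<le> 3/2" using eps' by simp
    hence "(1+\<epsilon>')*(1+\<epsilon>') \<le> 3/2*(3/2)" using eps' by (intro mult_mono) auto
    hence "(1+\<epsilon>')^2 \<le> 3" by (simp add: power2_eq_square)
    hence "(1+\<epsilon>')^2 * NN w \<le> 3 * NN w" using NN_pos[of w] by (intro mult_right_mono) auto
    thus ?thesis using MM_le[of w] by linarith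
  qed
  show "\<forall>\<^sub>F w in sequentially. 0 \<le> log 2 (real (MM w) * (real (MM w) + 1)) / NN w"
  proof (intro always_eventually allI)
    fix w
    have "1 * 1 \<le> real (MM w) * (real (MM w) + 1)" using MM_pos[of w] by (intro mult_mono) auto
    thus "0 \<le> log 2 (real (MM w) * (real (MM w) + 1)) / NN w" using NN_pos[of w] by simp
  qed
  show "\<forall>\<^sub>F w in sequentially. log 2 (real (MM w) * (real (MM w) + 1)) / NN w \<le> log 2 (12 * NN w ^ 2) / NN w"
  proof (intro always_eventually allI)
    fix w
    have a: "real (MM w) * (real (MM w) + 1) \<le> (3 * NN w) * (4 * NN w)"
      using M3[of w] NN_pos[of w] MM_pos[of w] by (intro mult_mono) auto
    have "log 2 (real (MM w) * (real (MM w) + 1)) \<le> log 2 (12 * NN w ^ 2)"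
      using a MM_pos[of w] NN_pos[of w] by (subst log_le_cancel_iff) (auto simp: power2_eq_square)
    thus "log 2 (real (MM w) * (real (MM w) + 1)) / NN w \<le> log 2 (12 * NN w ^ 2) / NN w"
      using NN_pos[of w] by (simp add: divide_right_mono)
  qed
  have "((\<lambda>x::real. log 2 (12 * x ^ 2) / x) \<longlongrightarrow> 0) at_top" by real_asymp
  from filterlim_compose[OF this NN_at_top] show "((\<lambda>w. log 2 (12 * NN w ^ 2) / NN w) \<longlongrightarrow> 0) sequentially" .
qed simp

lemma lim_DD: "((\<lambda>w. DD w / NN w) \<longlongrightarrow> 0) sequentially"
proof -
  have "DD w / NN w = 1 / NN w + log 2 (real (MM w) * (real (MM w) + 1)) / NN w
     + (1+\<epsilon>')^2 * \<bar>Ht w - bin_entropy (real (kk w) / real (MM w))\<bar>" for w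
    unfolding DD_def using NN_pos[of w] by (simp add: add_divide_distrib)
  moreover have "((\<lambda>w. 1 / NN w + log 2 (real (MM w) * (real (MM w) + 1)) / NN w
     + (1+\<epsilon>')^2 * \<bar>Ht w - bin_entropy (real (kk w) / real (MM w))\<bar>) \<longlongrightarrow>
      0 + 0 + (1+\<epsilon>')^2 * \<bar>bin_entropy tt - bin_entropy tt\<bar>) sequentially"
    by (intro tendsto_intros inv_NN lim_logM lim_Ht lim_HkM)
  ultimately show ?thesis by simp
qed

end


lemma one_minus_pow:
  fixes q :: real
  assumes "0 \<le> q" "q \<le> 1"
  shows "1 - (1 - q) ^ K \<ge> min (q * real K) 1 / 2"
proof -
  define y where "y = min (q * real K) 1"
  have y: "0 \<le> y" "y \<le> 1" "y \<le> q * real K" unfolding y_def using assms by auto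
  have "(1 - q) ^ K \<le> exp (- q) ^ K"
    using assms by (intro power_mono) (auto simp: exp_ge_add_one_self[of "-q", simplified])
  also have "\<dots> = exp (- (q * real K))" by (simp add: exp_of_nat_mult[symmetric] mult.commute)
  also have "\<dots> \<le> exp (- y)" using y by simp
  also have "\<dots> = 1 / exp y" by (simp add: exp_minus field_simps)
  also have "\<dots> \<le> 1 / (1 + y)" using y by (intro divide_left_mono) (auto simp: exp_ge_add_one_self)
  also have "\<dots> \<le> 1 - y / 2"
  proof -
    have "1 \<le> (1 - y/2) * (1 + y)" using y by (simp add: algebra_simps power2_eq_square) (smt (verit) mult_left_le_one_le)
    thus ?thesis using y by (simp add: field_simps)
  qed
  finally show ?thesis unfolding y_def by simp
qed

lemma L_bound:
  fixes r :: real and s :: int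
  assumes "1 \<le> s" "real_of_int s + 1 \<le> r"
  shows "real (nat ((2 * \<lfloor>r\<rfloor> + 1) div s)) \<ge> r / real_of_int s"
proof -
  define R where "R = \<lfloor>r\<rfloor>"
  have R: "r - 1 < real_of_int R" unfolding R_def by linarith
  have "(2*R+1) div s * s = (2*R+1) - (2*R+1) mod s" by (simp add: minus_mod_eq_div_mult)
  moreover have "(2*R+1) mod s < s" using assms by simp
  ultimately have a: "(2*R+1) div s * s > 2*R+1 - s" by linarith
  have "0 \<le> R" unfolding R_def using assms by simp
  hence nn: "0 \<le> (2*R+1) div s" using assms by (simp add: pos_imp_zdiv_nonneg_iff)
  have "real_of_int ((2*R+1) div s) * real_of_int s > real_of_int (2*R+1 - s)"
    using a by (metis of_int_less_iff of_int_mult)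
  hence "real_of_int ((2*R+1) div s) * real_of_int s > 2 * r - 1 - real_of_int s" using R by simp
  hence "real_of_int ((2*R+1) div s) * real_of_int s \<ge> r" using assms by linarith
  hence "real_of_int ((2*R+1) div s) \<ge> r / real_of_int s" using assms by (simp add: field_simps)
  thus ?thesis using nn unfolding R_def by simp
qed


definition wof :: "nat \<Rightarrow> nat" where
  "wof N = nat \<lfloor>(sqrt (real N) - 1) / 2\<rfloor>"

lemma wof_Nw: "wof (Nw w) = w"
proof -
  have "sqrt (real (Nw w)) = 2 * real w + 1" unfolding Nw_real by simp
  thus ?thesis unfolding wof_def by simp
qed

lemma Nw_wof: "1 \<le> N \<Longrightarrow> real (Nw (wof N)) \<le> real N"
proof -
  assume N: "1 \<le> N"
  have s1: "sqrt (real N) \<ge> 1" using N by simp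
  have t0: "0 \<le> (sqrt (real N) - 1) / 2" using s1 by simp
  hence "0 \<le> \<lfloor>(sqrt (real N) - 1) / 2\<rfloor>" by simp
  hence "real (wof N) = real_of_int \<lfloor>(sqrt (real N) - 1) / 2\<rfloor>" unfolding wof_def by simp
  also have "\<dots> \<le> (sqrt (real N) - 1) / 2" by (rule of_int_floor_le)
  finally have "real (wof N) \<le> (sqrt (real N) - 1) / 2" .
  hence "2 * real (wof N) + 1 \<le> sqrt (real N)" by simp
  hence "(2 * real (wof N) + 1)^2 \<le> (sqrt (real N))^2" by (intro power_mono) auto
  thus ?thesis unfolding Nw_real by simp
qed

lemma wof_at_top: "filterlim wof at_top sequentially"
proof (subst filterlim_at_top, intro allI)
  fix Z :: nat
  show "eventually (\<lambda>N. Z \<le> wof N) sequentially"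
  proof (rule eventually_sequentiallyI[of "(2*Z+3)^2"])
    fix N assume N: "(2*Z+3)^2 \<le> N"
    have "real ((2*Z+3)^2) \<le> real N" using N by (simp only: of_nat_le_iff)
    hence "(2 * real Z + 3)^2 \<le> real N" by simp
    hence "2 * real Z + 3 \<le> sqrt (real N)" by (rule real_le_rsqrt)
    hence "real Z + 1 \<le> (sqrt (real N) - 1) / 2" by simp
    hence "int Z + 1 \<le> \<lfloor>(sqrt (real N) - 1) / 2\<rfloor>" by (simp add: le_floor_iff)
    thus "Z \<le> wof N" unfolding wof_def by simp
  qed
qed

context A5 begin

lemma DD_nonneg: "DD w \<ge> 0"
proof -
  have "1 * 1 \<le> real (MM w) * (real (MM w) + 1)" using MM_pos[of w] by (intro mult_mono) auto
  hence "log 2 (real (MM w) * (real (MM w) + 1)) \<ge> 0" by simp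
  moreover have "0 \<le> (1+\<epsilon>')^2 * NN w * \<bar>Ht w - bin_entropy (real (kk w) / real (MM w))\<bar>"
    using NN_pos[of w] by simp
  ultimately show ?thesis unfolding DD_def by linarith
qed

definition "rr w = 2 powr ((1 - Ht w) * NN w / 2 - g (Nw w))"

lemma ev_rr: "eventually (\<lambda>w. rr w \<ge> 2 * real_of_int (mm w) + 2) sequentially"
proof -
  define c where "c = 1 - bin_entropy tt"
  have c: "c > 0" unfolding c_def using ent_less1[of tt] tt by simp
  have e1: "eventually (\<lambda>w. Ht w < bin_entropy tt + c/2) sequentially"
    using c by (intro order_tendstoD(2)[OF lim_Ht]) simp
  have c8: "0 < c/8" using c by simp
  have "((\<lambda>w. \<bar>g (Nw w) / NN w\<bar>) \<longlongrightarrow> 0) sequentially" by (rule tendsto_rabs_zero[OF lim_g])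
  from order_tendstoD(2)[OF this c8]
  have e2: "eventually (\<lambda>w. \<bar>g (Nw w) / NN w\<bar> < c/8) sequentially" .
  have "((\<lambda>x::real. log 2 (3 * x) / x) \<longlongrightarrow> 0) at_top" by real_asymp
  from filterlim_compose[OF this NN_at_top]
  have e3: "eventually (\<lambda>w. log 2 (3 * NN w) / NN w < c/8) sequentially"
    by (rule order_tendstoD(2)[OF _ c8])
  from e1 e2 e3 show ?thesis
  proof eventually_elim
    case (elim w)
    have N: "NN w \<ge> 1" by (rule NN_pos)
    have a: "1 - Ht w > c/2" using elim(1) unfolding c_def by (simp add: field_simps)
    have b: "g (Nw w) < c/8 * NN w" using elim(2) N by (simp add: abs_less_iff field_simps)
    have d: "log 2 (3 * NN w) < c/8 * NN w" using elim(3) N by (simp add: field_simps)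
    have "(1 - Ht w) * NN w / 2 \<ge> c/2 * NN w / 2" using a N by (intro divide_right_mono mult_right_mono) auto
    hence ex: "(1 - Ht w) * NN w / 2 - g (Nw w) > log 2 (3 * NN w)" using b d by (simp add: field_simps)
    have "3 * NN w = 2 powr (log 2 (3 * NN w))" using N by simp
    also have "\<dots> < rr w" unfolding rr_def using ex by simp
    finally have r3: "3 * NN w < rr w" .
    have "2 * real_of_int (mm w) + 1 \<le> (1+\<epsilon>') * (2 * real w + 1)"
      using mm_bounds(2)[of w] eps' by (simp add: algebra_simps)
    also have "\<dots> \<le> 2 * (2 * real w + 1)" using eps' by (intro mult_right_mono) auto
    also have "2 * real w + 1 \<le> NN w" unfolding NN_def Nw_real by (simp add: power2_eq_square)
    finally show ?case using r3 N by linarith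
  qed
qed

lemma ev_cond: "eventually (\<lambda>w. 0 < kk w \<and> kk w < MM w \<and> 0 < tau' tt w \<and> tau' tt w < 1 \<and> TT w > 1
   \<and> rr w \<ge> 2 * real_of_int (mm w) + 2) sequentially"
proof -
  have e1: "eventually (\<lambda>w. real (kk w) / real (MM w) < 1) sequentially"
    using tt by (intro order_tendstoD(2)[OF lim_kM]) simp
  have e2: "eventually (\<lambda>w. 0 < tau' tt w) sequentially"
    using tt by (intro order_tendstoD(1)[OF lim_tau']) simp
  have e3: "eventually (\<lambda>w. tau' tt w < 1) sequentially"
    using tt by (intro order_tendstoD(2)[OF lim_tau']) simp
  from e1 e2 e3 ev_TT ev_rr show ?thesis
  proof eventually_elim
    case (elim w)
    have "real (kk w) > 0" using kk_bounds[of w] elim(4) by simp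
    moreover have "real (kk w) < real (MM w)" using elim(1) MM_pos[of w] by (simp add: field_simps)
    ultimately show ?case using elim by simp
  qed
qed

lemma config_prob_mono: "(\<And>\<sigma>. P \<sigma> \<Longrightarrow> Q \<sigma>) \<Longrightarrow> config_prob n P \<le> config_prob n Q"
  unfolding config_prob_def by (intro measure_pmf.finite_measure_mono) auto

lemma step:
  assumes C: "0 < kk w" "kk w < MM w" "0 < tau' tt w" "tau' tt w < 1" "TT w > 1"
     "rr w \<ge> 2 * real_of_int (mm w) + 2"
    and c0: "c0 \<in> torus_vertices n" and rn: "2 * rr w + 1 \<le> real n"
  shows "config_prob n (\<lambda>\<sigma>. \<exists>c. radical_region tt \<epsilon> \<epsilon>' w n \<sigma> c \<and>
                 nbhd n c ((1 + \<epsilon>') * real w) \<subseteq> nbhd n c0 (rr w))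
     \<ge> 2 powr (- (1 - Ht w) * (2 * \<epsilon>' + \<epsilon>'^2) * NN w - (2 * \<bar>g (Nw w)\<bar> + DD w))"
proof -
  define \<rho> where "\<rho> = (1 + \<epsilon>') * real w"
  define r where "r = rr w"
  define k where "k = kk w"
  define M where "M = MM w"
  define L where "L = nat ((2 * \<lfloor>r\<rfloor> + 1) div (2 * \<lfloor>\<rho>\<rfloor> + 1))"
  define q where "q = real (M choose k) / 2 ^ M"
  define Hk where "Hk = bin_entropy (real k / real M)"
  have rho0: "0 \<le> \<rho>" unfolding \<rho>_def using eps' by simp
  have r0: "0 < r" unfolding r_def rr_def by simp
  have mfl: "\<lfloor>\<rho>\<rfloor> = mm w" unfolding \<rho>_def mm_def ..
  have MMe: "nat (2 * \<lfloor>\<rho>\<rfloor> + 1) ^ 2 = M" unfolding mfl M_def MM_def ..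
  have mn: "2 * \<lfloor>\<rho>\<rfloor> + 1 \<le> int n"
  proof -
    have "real_of_int (2 * \<lfloor>\<rho>\<rfloor> + 1) \<le> real n" unfolding mfl using C(6) rn r0 unfolding r_def by simp
    thus ?thesis by linarith
  qed
  have P1: "config_prob n (\<lambda>\<sigma>. \<exists>c. c \<in> torus_vertices n \<and> minus_count \<sigma> (nbhd n c \<rho>) \<le> k
            \<and> nbhd n c \<rho> \<subseteq> nbhd n c0 r) \<ge> 1 - (1 - q) ^ (L^2)"
    using core[OF c0 rho0 _ _ mn, of r k] r0 rn unfolding MMe q_def L_def r_def by simp
  have P2: "config_prob n (\<lambda>\<sigma>. \<exists>c. c \<in> torus_vertices n \<and> minus_count \<sigma> (nbhd n c \<rho>) \<le> k
            \<and> nbhd n c \<rho> \<subseteq> nbhd n c0 r) \<le> config_prob n (\<lambda>\<sigma>. \<exists>c. radical_region tt \<epsilon> \<epsilon>' w n \<sigma> c \<and>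
                 nbhd n c ((1 + \<epsilon>') * real w) \<subseteq> nbhd n c0 (rr w))"
  proof (rule config_prob_mono)
    fix \<sigma> assume "\<exists>c. c \<in> torus_vertices n \<and> minus_count \<sigma> (nbhd n c \<rho>) \<le> k \<and> nbhd n c \<rho> \<subseteq> nbhd n c0 r"
    then obtain c where c: "c \<in> torus_vertices n" "minus_count \<sigma> (nbhd n c \<rho>) \<le> k" "nbhd n c \<rho> \<subseteq> nbhd n c0 r" by blast
    have "real (minus_count \<sigma> (nbhd n c \<rho>)) < TT w" using c(2) kk_bounds[of w] C(5) unfolding k_def by simp
    hence "radical_region tt \<epsilon> \<epsilon>' w n \<sigma> c" unfolding radical_region_def TT_def NN_def \<rho>_def using c(1) by simp
    thus "\<exists>c. radical_region tt \<epsilon> \<epsilon>' w n \<sigma> c \<and> nbhd n c ((1 + \<epsilon>') * real w) \<subseteq> nbhd n c0 (rr w)"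
      using c(3) unfolding \<rho>_def r_def by blast
  qed
  have q01: "0 \<le> q" "q \<le> 1" unfolding q_def using binomial_le_pow2[of M k] by (auto simp: field_simps)
  have P3: "1 - (1 - q) ^ (L^2) \<ge> min (q * real (L^2)) 1 / 2" by (rule one_minus_pow[OF q01])
  define Z where "Z = (1 - Ht w) * (2 * \<epsilon>' + \<epsilon>'^2) * NN w"
  define hh where "hh = 2 * \<bar>g (Nw w)\<bar> + DD w"
  define lg where "lg = log 2 (real M * (real M + 1))"
  have Mpos: "real M \<ge> 1" unfolding M_def by (rule MM_pos)
  have "1 * 1 \<le> real M * (real M + 1)" using Mpos by (intro mult_mono) auto
  hence lg0: "lg \<ge> 0" unfolding lg_def by simp
  have Ht1: "Ht w \<le> 1" unfolding Ht_def using ent_le1 C(3,4) by simp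
  have Z0: "Z \<ge> 0" unfolding Z_def using Ht1 eps' NN_pos[of w] by simp
  have DD1: "DD w \<ge> 1"
  proof -
    have "0 \<le> (1+\<epsilon>')^2 * NN w * \<bar>Ht w - bin_entropy (real (kk w) / real (MM w))\<bar>"
      using NN_pos[of w] by simp
    thus ?thesis unfolding DD_def using lg0 unfolding lg_def M_def by linarith
  qed
  have hh1: "hh \<ge> 1" unfolding hh_def using DD1 by simp
  have half: "2 powr (- Z - hh) \<le> 1 / 2"
  proof -
    have "2 powr (- Z - hh) \<le> 2 powr (-1)" using Z0 hh1 by (intro powr_mono) auto
    also have "(2::real) powr (-1) = 1/2" by (simp add: powr_minus_divide)
    finally show ?thesis .
  qed
  define E where "E = real M * Hk - real M + 2 * log 2 r - lg"
  have qK: "q * real (L^2) \<ge> 2 powr E"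
  proof -
    have ent: "2 powr (real M * Hk) \<le> real (M + 1) * real (M choose k)"
      unfolding Hk_def by (rule entropy_binom) (use C(1,2) in \<open>auto simp: k_def M_def\<close>)
    have q1: "q \<ge> 2 powr (real M * Hk) / (real (M + 1) * 2 ^ M)"
    proof -
      have "2 powr (real M * Hk) / real (M + 1) \<le> real (M choose k)"
        using ent by (simp add: pos_divide_le_eq mult.commute)
      hence "(2 powr (real M * Hk) / real (M + 1)) / 2 ^ M \<le> real (M choose k) / 2 ^ M"
        by (intro divide_right_mono) auto
      thus ?thesis unfolding q_def by (simp add: divide_divide_eq_left mult.commute)
    qed
    have s1: "1 \<le> 2 * mm w + 1" using mm_nonneg[of w] by simp
    have Lb: "real L \<ge> r / real_of_int (2 * mm w + 1)"
      unfolding L_def mfl using L_bound[OF s1, of r] C(6) unfolding r_def by simp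
    have Ms: "real M = (real_of_int (2 * mm w + 1))^2" unfolding M_def MM_real by simp
    have K1: "real (L^2) \<ge> r^2 / real M"
    proof -
      have "(r / real_of_int (2 * mm w + 1))^2 \<le> real L ^ 2"
        using Lb r0 mm_nonneg[of w] by (intro power_mono) auto
      thus ?thesis unfolding Ms by (simp add: power_divide)
    qed
    have "2 powr E = 2 powr (real M * Hk) / 2 ^ M * r^2 / (real M * (real M + 1))"
    proof -
      have a: "2 powr (2 * log 2 r) = r^2" using r0
        by (simp add: powr_powr[symmetric] mult.commute[of 2] powr_realpow) 
      have b: "2 powr lg = real M * (real M + 1)" unfolding lg_def using Mpos by simp
      have c: "2 powr real M = 2 ^ M" by (simp add: powr_realpow)
      show ?thesis unfolding E_def powr_diff powr_add a b c by simp
    qed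
    also have "\<dots> = (2 powr (real M * Hk) / (real (M + 1) * 2 ^ M)) * (r^2 / real M)"
      by (simp add: field_simps)
    also have "\<dots> \<le> q * real (L^2)"
      using q1 K1 Mpos r0 q01 by (intro mult_mono) auto
    finally show ?thesis .
  qed
  have Ebound: "E \<ge> 1 - Z - hh"
  proof -
    have lr: "2 * log 2 r = (1 - Ht w) * NN w - 2 * g (Nw w)"
      unfolding r_def rr_def by (simp add: log_powr)
    define A where "A = (1+\<epsilon>')^2 * NN w"
    have Hk1: "Hk \<le> 1" unfolding Hk_def using C(1,2) unfolding k_def M_def
      by (intro ent_le1) (auto simp: field_simps)
    have MA: "real M \<le> A" unfolding A_def M_def by (rule MM_le)
    have f1: "real M * (Hk - 1) \<ge> A * (Hk - 1)" using MA Hk1 by (intro mult_right_mono_neg) auto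
    have A0: "A \<ge> 0" unfolding A_def using NN_pos[of w] by simp
    have f2: "A * (Hk - 1) + A * (1 - Ht w) + A * \<bar>Ht w - Hk\<bar> \<ge> 0"
    proof -
      have "A * (Hk - 1) + A * (1 - Ht w) + A * \<bar>Ht w - Hk\<bar> = A * (Hk - Ht w + \<bar>Ht w - Hk\<bar>)"
        by (simp add: algebra_simps)
      thus ?thesis using A0 by simp
    qed
    have f3: "Z + (1 - Ht w) * NN w = A * (1 - Ht w)" unfolding Z_def A_def by (simp add: algebra_simps power2_eq_square)
    have f4: "hh = 2 * \<bar>g (Nw w)\<bar> + 1 + lg + A * \<bar>Ht w - Hk\<bar>"
      unfolding hh_def DD_def lg_def A_def Hk_def k_def M_def by (simp add: algebra_simps)
    have f5: "real M * Hk - real M = real M * (Hk - 1)" by (simp add: algebra_simps)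
    have f6: "g (Nw w) \<le> \<bar>g (Nw w)\<bar>" by simp
    show ?thesis unfolding E_def using lr f1 f2 f3 f4 f5 f6 by linarith
  qed
  have P4: "2 powr (- Z - hh) \<le> min (q * real (L^2)) 1 / 2"
  proof -
    have "2 powr (- Z - hh) \<le> 2 powr (E - 1)" using Ebound by (intro powr_mono) auto
    also have "\<dots> = 2 powr E / 2" by (simp add: powr_diff)
    also have "\<dots> \<le> q * real (L^2) / 2" using qK by simp
    finally show ?thesis using half by (simp add: min_def)
  qed
  have "2 powr (- (1 - Ht w) * (2 * \<epsilon>' + \<epsilon>'^2) * NN w - (2 * \<bar>g (Nw w)\<bar> + DD w)) = 2 powr (- Z - hh)"
    unfolding Z_def hh_def by (simp add: algebra_simps)
  thus ?thesis using P1 P2 P3 P4 by linarith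
qed

lemma final:
  "\<exists>h :: nat \<Rightarrow> real. h \<in> o(\<lambda>N. real N) \<and>
    (\<forall>\<^sub>F w in sequentially.
      \<forall>n c0. c0 \<in> torus_vertices n \<longrightarrow>
        (let N = Nw w;
             r = 2 powr ((1 - bin_entropy (tau' tt w)) * real N / 2 - g N)
         in 2 * r + 1 \<le> real n \<longrightarrow>
            config_prob n (\<lambda>\<sigma>. \<exists>c. radical_region tt \<epsilon> \<epsilon>' w n \<sigma> c \<and>
                 nbhd n c ((1 + \<epsilon>') * real w) \<subseteq> nbhd n c0 r)
            \<ge> 2 powr (- (1 - bin_entropy (tau' tt w)) * (2 * \<epsilon>' + \<epsilon>'^2) * real N - h N)))"
proof (intro exI conjI)
  define h where "h N = 2 * \<bar>g N\<bar> + DD (wof N)" for N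
  show "h \<in> o(\<lambda>N. real N)"
  proof (rule smalloI_tendsto)
    show "\<forall>\<^sub>F N in sequentially. real N \<noteq> 0"
      by (rule eventually_sequentiallyI[of 1]) simp
    have t1: "((\<lambda>N. 2 * \<bar>g N\<bar> / real N) \<longlongrightarrow> 0) sequentially"
    proof -
      have "((\<lambda>N. 2 * \<bar>g N / real N\<bar>) \<longlongrightarrow> 2 * 0) sequentially"
        by (intro tendsto_mult tendsto_const tendsto_rabs_zero smalloD_tendsto[OF g])
      moreover have "2 * \<bar>g N / real N\<bar> = 2 * \<bar>g N\<bar> / real N" for N by (simp add: abs_divide)
      ultimately show ?thesis by simp
    qed
    have t2: "((\<lambda>N. DD (wof N) / real N) \<longlongrightarrow> 0) sequentially"
    proof (rule tendsto_sandwich[of "\<lambda>_. 0" _ _ "\<lambda>N. DD (wof N) / NN (wof N)"])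
      show "\<forall>\<^sub>F N in sequentially. 0 \<le> DD (wof N) / real N"
        using DD_nonneg by (intro always_eventually allI) simp
      show "\<forall>\<^sub>F N in sequentially. DD (wof N) / real N \<le> DD (wof N) / NN (wof N)"
      proof (rule eventually_sequentiallyI[of 1])
        fix N :: nat assume N: "1 \<le> N"
        show "DD (wof N) / real N \<le> DD (wof N) / NN (wof N)"
          using Nw_wof[OF N] NN_pos[of "wof N"] DD_nonneg[of "wof N"] unfolding NN_def
          by (intro divide_left_mono) auto
      qed
      show "((\<lambda>N. DD (wof N) / NN (wof N)) \<longlongrightarrow> 0) sequentially"
        using filterlim_compose[OF lim_DD wof_at_top] .
    qed simp
    have "((\<lambda>N. 2 * \<bar>g N\<bar> / real N + DD (wof N) / real N) \<longlongrightarrow> 0 + 0) sequentially"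
      by (rule tendsto_add[OF t1 t2])
    thus "((\<lambda>N. h N / real N) \<longlongrightarrow> 0) sequentially"
      unfolding h_def by (simp add: add_divide_distrib)
  qed
  show "\<forall>\<^sub>F w in sequentially.
      \<forall>n c0. c0 \<in> torus_vertices n \<longrightarrow>
        (let N = Nw w;
             r = 2 powr ((1 - bin_entropy (tau' tt w)) * real N / 2 - g N)
         in 2 * r + 1 \<le> real n \<longrightarrow>
            config_prob n (\<lambda>\<sigma>. \<exists>c. radical_region tt \<epsilon> \<epsilon>' w n \<sigma> c \<and>
                 nbhd n c ((1 + \<epsilon>') * real w) \<subseteq> nbhd n c0 r)
            \<ge> 2 powr (- (1 - bin_entropy (tau' tt w)) * (2 * \<epsilon>' + \<epsilon>'^2) * real N - h N))"
    using ev_cond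
  proof eventually_elim
    case (elim w)
    show ?case
    proof (intro allI impI)
      fix n c0 assume c0: "c0 \<in> torus_vertices n"
      have hw: "h (Nw w) = 2 * \<bar>g (Nw w)\<bar> + DD w" unfolding h_def wof_Nw ..
      have rw: "2 powr ((1 - bin_entropy (tau' tt w)) * real (Nw w) / 2 - g (Nw w)) = rr w"
        unfolding rr_def Ht_def NN_def ..
      show "let N = Nw w;
             r = 2 powr ((1 - bin_entropy (tau' tt w)) * real N / 2 - g N)
         in 2 * r + 1 \<le> real n \<longrightarrow>
            config_prob n (\<lambda>\<sigma>. \<exists>c. radical_region tt \<epsilon> \<epsilon>' w n \<sigma> c \<and>
                 nbhd n c ((1 + \<epsilon>') * real w) \<subseteq> nbhd n c0 r)
            \<ge> 2 powr (- (1 - bin_entropy (tau' tt w)) * (2 * \<epsilon>' + \<epsilon>'^2) * real N - h N)"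
        unfolding Let_def rw hw
        using step[of w c0 n] elim c0 unfolding Ht_def NN_def by auto
    qed
  qed
qed

end

theorem lemmaA5:
  fixes tt \<epsilon> \<epsilon>' :: real and g :: "nat \<Rightarrow> real"
  assumes "0 < tt" "tt < 1/2"
    and "0 < \<epsilon>" "\<epsilon> < 1/2" and "0 < \<epsilon>'" "\<epsilon>' < 1/2"
    and "g \<in> o(\<lambda>N. real N)"
  shows "\<exists>h :: nat \<Rightarrow> real. h \<in> o(\<lambda>N. real N) \<and>
    (\<forall>\<^sub>F w in sequentially.
      \<forall>n c0. c0 \<in> torus_vertices n \<longrightarrow>
        (let N = Nw w;
             r = 2 powr ((1 - bin_entropy (tau' tt w)) * real N / 2 - g N)
         in 2 * r + 1 \<le> real n \<longrightarrow>
            config_prob n (\<lambda>\<sigma>. \<exists>c. radical_region tt \<epsilon> \<epsilon>' w n \<sigma> c \<and>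
                 nbhd n c ((1 + \<epsilon>') * real w) \<subseteq> nbhd n c0 r)
            \<ge> 2 powr (- (1 - bin_entropy (tau' tt w)) * (2 * \<epsilon>' + \<epsilon>'^2) * real N - h N)))"
proof -
  have "A5 tt \<epsilon> \<epsilon>' g" unfolding A5_def using assms by auto
  thus ?thesis by (rule A5.final)
qed

end
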